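(* Let $G=(\mathscr{V},\mathscr{E},m_0,\theta)$ be a weighted graph (locally finite, connected, without loops), and let $m:\mathscr{V}\to(0,\infty)$ be arbitrary. Define, for $x\in\mathscr{V}$, \[ W_m(x):=\frac{1}{m_0^2(x)}\sum_{y\in\mathscr{V}}\mathscr{E}(x,y)\,\frac{m(y)}{m(x)}\,\frac{m_0(x)}{m_0(y)},\qquad V_m(x):=d_G(x)-W_m(x). \] Then \[ \langle f, V_m(Q)f\rangle\le \langle f,\Delta_{\mathscr{E},\theta}f\rangle\quad\text{for all } f\in\mathcal{C}_c(\mathscr{V}). \] Moreover, if $G$ is bi-partite, then \[ \langle f,\Delta_{\mathscr{E},\theta}f\rangle\le\langle f,(d_G(Q)+W_m(Q))f\rangle\quad\text{for all } f\in\mathcal{C}_c(\mathscr{V}). \]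
   Context: A weighted graph $G=(\mathscr{V},\mathscr{E},m_0,\theta)$ consists of a countable set $\mathscr{V}$, a symmetric map $\mathscr{E}:\mathscr{V}\times\mathscr{V}\to[0,\infty)$, a vertex weight $m_0:\mathscr{V}\to(0,\infty)$ and a phase $\theta:\mathscr{V}\times\mathscr{V}\to[-\pi,\pi]$ with $\theta(x,y)=-\theta(y,x)$. Vertices $x,y$ are neighbors ($x\sim y$) if $\mathscr{E}(x,y)\neq0$. Locally finite: every vertex has finitely many neighbors; connected: any two vertices are joined by a finite sequence of successive neighbors; no loops: $\mathscr{E}(x,x)=0$. The Hilbert space is $\ell^2(\mathscr{V},m_0^2)$ with $\langle f,g\rangle=\sum_x m_0^2(x)\overline{f(x)}g(x)$; $\mathcal{C}_c(\mathscr{V})$ denotes finitely supported functions. $\Delta_{\mathscr{E},\theta}$ is the Friedrichs extension of the form $\frac12\sum_{x,y}\mathscr{E}(x,y)|f(x)-e^{i\theta(x,y)}f(y)|^2$ on $\mathcal{C}_c(\mathscr{V})$; on $\mathcal{C}_c(\mathscr{V})$ it acts by $(\Delta_{\mathscr{E},\theta}f)(x)=m_0^{-2}(x)\sum_y\mathscr{E}(x,y)(f(x)-e^{i\theta(x,y)}f(y))$. The weighted degree is $d_G(x)=m_0^{-2}(x)\sum_y\mathscr{E}(x,y)$. For a function $W$ on $\mathscr{V}$, $W(Q)$ is multiplication by $W$. A graph is bi-partite if $\mathscr{V}$ can be partitioned into two subsets such that no two vertices in the same subset are neighbors. *)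

theory Defs
  imports "HOL-Analysis.Analysis" "HOL-Library.Complex_Order"
begin

definition weighted_graph ::
  "('v \<Rightarrow> 'v \<Rightarrow> real) \<Rightarrow> ('v \<Rightarrow> real) \<Rightarrow> ('v \<Rightarrow> 'v \<Rightarrow> real) \<Rightarrow> bool" where
  "weighted_graph E m0 \<theta> \<longleftrightarrow>
     (\<forall>x y. E x y = E y x) \<and> (\<forall>x y. 0 \<le> E x y) \<and>
     (\<forall>x. 0 < m0 x) \<and>
     (\<forall>x y. -pi \<le> \<theta> x y \<and> \<theta> x y \<le> pi \<and> \<theta> x y = - \<theta> y x)"

definition neighbors :: "('v \<Rightarrow> 'v \<Rightarrow> real) \<Rightarrow> 'v \<Rightarrow> 'v \<Rightarrow> bool" where
  "neighbors E x y \<longleftrightarrow> E x y \<noteq> 0"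

definition locally_finite :: "('v \<Rightarrow> 'v \<Rightarrow> real) \<Rightarrow> bool" where
  "locally_finite E \<longleftrightarrow> (\<forall>x. finite {y. neighbors E x y})"

definition connected_graph :: "('v \<Rightarrow> 'v \<Rightarrow> real) \<Rightarrow> bool" where
  "connected_graph E \<longleftrightarrow> (\<forall>x y. (neighbors E)\<^sup>*\<^sup>* x y)"

definition no_loops :: "('v \<Rightarrow> 'v \<Rightarrow> real) \<Rightarrow> bool" where
  "no_loops E \<longleftrightarrow> (\<forall>x. E x x = 0)"

definition bipartite :: "('v \<Rightarrow> 'v \<Rightarrow> real) \<Rightarrow> bool" where
  "bipartite E \<longleftrightarrow> (\<exists>A. \<forall>x y. neighbors E x y \<longrightarrow> (x \<in> A \<longleftrightarrow> y \<notin> A))"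

definition Cc :: "('v \<Rightarrow> complex) set" where
  "Cc = {f. finite {x. f x \<noteq> 0}}"

definition inner_m0 :: "('v \<Rightarrow> real) \<Rightarrow> ('v \<Rightarrow> complex) \<Rightarrow> ('v \<Rightarrow> complex) \<Rightarrow> complex" where
  "inner_m0 m0 f g = (\<Sum>\<^sub>\<infinity>x. complex_of_real ((m0 x)\<^sup>2) * cnj (f x) * g x)"

definition mag_laplacian ::
  "('v \<Rightarrow> 'v \<Rightarrow> real) \<Rightarrow> ('v \<Rightarrow> real) \<Rightarrow> ('v \<Rightarrow> 'v \<Rightarrow> real) \<Rightarrow> ('v \<Rightarrow> complex) \<Rightarrow> 'v \<Rightarrow> complex" where
  "mag_laplacian E m0 \<theta> f x =
     complex_of_real (1 / (m0 x)\<^sup>2) *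
       (\<Sum>\<^sub>\<infinity>y. complex_of_real (E x y) * (f x - cis (\<theta> x y) * f y))"

definition wdeg :: "('v \<Rightarrow> 'v \<Rightarrow> real) \<Rightarrow> ('v \<Rightarrow> real) \<Rightarrow> 'v \<Rightarrow> real" where
  "wdeg E m0 x = (1 / (m0 x)\<^sup>2) * (\<Sum>\<^sub>\<infinity>y. E x y)"

definition W_m :: "('v \<Rightarrow> 'v \<Rightarrow> real) \<Rightarrow> ('v \<Rightarrow> real) \<Rightarrow> ('v \<Rightarrow> real) \<Rightarrow> 'v \<Rightarrow> real" where
  "W_m E m0 m x = (1 / (m0 x)\<^sup>2) * (\<Sum>\<^sub>\<infinity>y. E x y * (m y / m x) * (m0 x / m0 y))"

definition V_m :: "('v \<Rightarrow> 'v \<Rightarrow> real) \<Rightarrow> ('v \<Rightarrow> real) \<Rightarrow> ('v \<Rightarrow> real) \<Rightarrow> 'v \<Rightarrow> real" where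
  "V_m E m0 m x = wdeg E m0 x - W_m E m0 m x"

definition mult_op :: "('v \<Rightarrow> real) \<Rightarrow> ('v \<Rightarrow> complex) \<Rightarrow> 'v \<Rightarrow> complex" where
  "mult_op W f x = complex_of_real (W x) * f x"

end

theory Submission
  imports Defs
begin

lemma infsum_fin:
  fixes g :: "'a \<Rightarrow> 'b::{comm_monoid_add, t2_space}"
  assumes "finite S" "\<And>x. x \<notin> S \<Longrightarrow> g x = 0"
  shows "infsum g UNIV = sum g S"
proof -
  have "infsum g UNIV = infsum g S"
    by (rule infsum_cong_neutral) (use assms in auto)
  then show ?thesis using assms by simp
qed

lemma amgm:
  fixes e a b p q s t :: real
  assumes "0 \<le> e" "0 < p" "0 < q" "0 < s" "0 < t"
  shows "2*e*a*b \<le> e*(p/q)*(s/t)*a^2 + e*(q/p)*(t/s)*b^2"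
proof -
  define r :: real where "r = p * s * inverse (q * t)"
  have r: "r > 0" using assms by (simp add: r_def)
  have 1: "e*(p/q)*(s/t) = e*r" by (simp add: r_def divide_inverse algebra_simps)
  have 2: "e*(q/p)*(t/s) = e/r" using assms by (simp add: r_def divide_inverse algebra_simps)
  have "e*r*a^2 + e/r*b^2 - 2*e*a*b = e*(r*a - b)^2/r"
    using r by (simp add: field_simps power2_eq_square)
  moreover have "e*(r*a - b)^2/r \<ge> 0" using r assms by simp
  ultimately show ?thesis unfolding 1 2 by linarith
qed

theorem proposition1p1:
  fixes E :: "'v::countable \<Rightarrow> 'v \<Rightarrow> real"
    and m0 m :: "'v \<Rightarrow> real"
    and \<theta> :: "'v \<Rightarrow> 'v \<Rightarrow> real"
  assumes "weighted_graph E m0 \<theta>"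
    and "locally_finite E"
    and "connected_graph E"
    and "no_loops E"
    and "\<forall>x. 0 < m x"
  shows "(\<forall>f \<in> Cc. inner_m0 m0 f (mult_op (V_m E m0 m) f)
                    \<le> inner_m0 m0 f (mag_laplacian E m0 \<theta> f))
       \<and> (bipartite E \<longrightarrow>
           (\<forall>f \<in> Cc. inner_m0 m0 f (mag_laplacian E m0 \<theta> f)
                    \<le> inner_m0 m0 f (mult_op (\<lambda>x. wdeg E m0 x + W_m E m0 m x) f)))"
proof -
  have Esym: "\<And>x y. E x y = E y x" and Epos: "\<And>x y. 0 \<le> E x y"
    and m0pos: "\<And>x. 0 < m0 x" and thsym: "\<And>x y. \<theta> x y = - \<theta> y x"
    using assms(1) unfolding weighted_graph_def by blast+
  have mpos: "\<And>x. 0 < m x" using assms(5) by auto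
  define Nb where "Nb x = {y. E x y \<noteq> 0}" for x
  have Nbfin: "finite (Nb x)" for x
    using assms(2) unfolding locally_finite_def neighbors_def Nb_def by auto
  define w where "w x y = E x y * (m y / m x) * (m0 x / m0 y)" for x y
  have wpos: "0 \<le> w x y" for x y
    unfolding w_def using Epos[of x y] mpos[of x] mpos[of y] m0pos[of x] m0pos[of y] by simp
  have deg: "wdeg E m0 x = (1 / (m0 x)\<^sup>2) * sum (E x) (Nb x)" for x
    unfolding wdeg_def by (subst infsum_fin[OF Nbfin]) (auto simp: Nb_def)
  have Wm: "W_m E m0 m x = (1 / (m0 x)\<^sup>2) * sum (w x) (Nb x)" for x
    unfolding W_m_def w_def by (subst infsum_fin[OF Nbfin]) (auto simp: Nb_def)
  have lap: "mag_laplacian E m0 \<theta> f x = complex_of_real (1 / (m0 x)\<^sup>2) *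
       (\<Sum>y\<in>Nb x. complex_of_real (E x y) * (f x - cis (\<theta> x y) * f y))" for f x
    unfolding mag_laplacian_def by (subst infsum_fin[OF Nbfin]) (auto simp: Nb_def)
  have main: "inner_m0 m0 f (mult_op (V_m E m0 m) f) \<le> inner_m0 m0 f (mag_laplacian E m0 \<theta> f)
     \<and> inner_m0 m0 f (mag_laplacian E m0 \<theta> f)
                    \<le> inner_m0 m0 f (mult_op (\<lambda>x. wdeg E m0 x + W_m E m0 m x) f)"
    if fC: "f \<in> Cc" for f
  proof -
    define A where "A = {x. f x \<noteq> 0}"
    have Afin: "finite A" using fC unfolding Cc_def A_def by simp
    define a where "a x = cmod (f x)" for x
    define T where "T x y = complex_of_real (E x y) * cnj (f x) * cis (\<theta> x y) * f y" for x y
    define D where "D = (\<Sum>x\<in>A. \<Sum>y\<in>Nb x. E x y * (a x)^2)"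
    define R where "R = (\<Sum>x\<in>A. \<Sum>y\<in>Nb x. w x y * (a x)^2)"
    define R' where "R' = (\<Sum>x\<in>A. \<Sum>y\<in>A. w x y * (a x)^2)"
    define ST where "ST = (\<Sum>x\<in>A. \<Sum>y\<in>A. T x y)"
    have cf: "cnj (f x) * f x = complex_of_real ((a x)^2)" for x
      unfolding a_def by (metis complex_norm_square mult.commute)
    have sq: "(m0 x)\<^sup>2 * (1 / (m0 x)\<^sup>2) = 1" for x using m0pos[of x] by simp
    have multop: "inner_m0 m0 f (mult_op U f) = complex_of_real (\<Sum>x\<in>A. (m0 x)\<^sup>2 * U x * (a x)^2)" for U
    proof -
      have "inner_m0 m0 f (mult_op U f) = (\<Sum>x\<in>A. complex_of_real ((m0 x)\<^sup>2) * cnj (f x) * (complex_of_real (U x) * f x))"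
        unfolding inner_m0_def mult_op_def by (rule infsum_fin[OF Afin]) (auto simp: A_def)
      also have "\<dots> = (\<Sum>x\<in>A. complex_of_real ((m0 x)\<^sup>2 * U x * (a x)^2))"
      proof (rule sum.cong[OF refl])
        fix x
        have "complex_of_real ((m0 x)\<^sup>2) * cnj (f x) * (complex_of_real (U x) * f x)
           = complex_of_real ((m0 x)\<^sup>2) * complex_of_real (U x) * (cnj (f x) * f x)"
          by (simp only: ac_simps)
        also have "\<dots> = complex_of_real ((m0 x)\<^sup>2 * U x * (a x)^2)"
          unfolding cf by simp
        finally show "complex_of_real ((m0 x)\<^sup>2) * cnj (f x) * (complex_of_real (U x) * f x) = complex_of_real ((m0 x)\<^sup>2 * U x * (a x)^2)" .
      qed
      finally show ?thesis by simp
    qed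
    have DV: "(\<Sum>x\<in>A. (m0 x)\<^sup>2 * V_m E m0 m x * (a x)^2) = D - R"
    proof -
      have "(\<Sum>x\<in>A. (m0 x)\<^sup>2 * V_m E m0 m x * (a x)^2) = (\<Sum>x\<in>A. (\<Sum>y\<in>Nb x. E x y * (a x)^2) - (\<Sum>y\<in>Nb x. w x y * (a x)^2))"
      proof (rule sum.cong[OF refl])
        fix x
        have "(m0 x)\<^sup>2 * V_m E m0 m x * (a x)^2 = ((m0 x)\<^sup>2 * (1 / (m0 x)\<^sup>2)) * (sum (E x) (Nb x) - sum (w x) (Nb x)) * (a x)^2"
          unfolding V_m_def deg Wm by (simp add: algebra_simps)
        then show "(m0 x)\<^sup>2 * V_m E m0 m x * (a x)^2 = (\<Sum>y\<in>Nb x. E x y * (a x)^2) - (\<Sum>y\<in>Nb x. w x y * (a x)^2)"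
          unfolding sq by (simp add: sum_distrib_right algebra_simps)
      qed
      then show ?thesis unfolding D_def R_def by (simp add: sum_subtractf)
    qed
    have DW: "(\<Sum>x\<in>A. (m0 x)\<^sup>2 * (wdeg E m0 x + W_m E m0 m x) * (a x)^2) = D + R"
    proof -
      have "(\<Sum>x\<in>A. (m0 x)\<^sup>2 * (wdeg E m0 x + W_m E m0 m x) * (a x)^2) = (\<Sum>x\<in>A. (\<Sum>y\<in>Nb x. E x y * (a x)^2) + (\<Sum>y\<in>Nb x. w x y * (a x)^2))"
      proof (rule sum.cong[OF refl])
        fix x
        have "(m0 x)\<^sup>2 * (wdeg E m0 x + W_m E m0 m x) * (a x)^2 = ((m0 x)\<^sup>2 * (1 / (m0 x)\<^sup>2)) * (sum (E x) (Nb x) + sum (w x) (Nb x)) * (a x)^2"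
          unfolding deg Wm by (simp add: algebra_simps)
        then show "(m0 x)\<^sup>2 * (wdeg E m0 x + W_m E m0 m x) * (a x)^2 = (\<Sum>y\<in>Nb x. E x y * (a x)^2) + (\<Sum>y\<in>Nb x. w x y * (a x)^2)"
          unfolding sq by (simp add: sum_distrib_right algebra_simps)
      qed
      then show ?thesis unfolding D_def R_def by (simp add: sum.distrib)
    qed
    have TA: "(\<Sum>y\<in>Nb x. T x y) = (\<Sum>y\<in>A. T x y)" for x
    proof -
      have "(\<Sum>y\<in>Nb x. T x y) = (\<Sum>y\<in>Nb x \<inter> A. T x y)"
        by (rule sum.mono_neutral_right) (auto simp: Nbfin T_def A_def)
      also have "\<dots> = (\<Sum>y\<in>A. T x y)"
        by (rule sum.mono_neutral_left) (auto simp: Afin T_def Nb_def)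
      finally show ?thesis .
    qed
    have lapinner: "inner_m0 m0 f (mag_laplacian E m0 \<theta> f) = complex_of_real D - ST"
    proof -
      have "inner_m0 m0 f (mag_laplacian E m0 \<theta> f) = (\<Sum>x\<in>A. complex_of_real ((m0 x)\<^sup>2) * cnj (f x) * mag_laplacian E m0 \<theta> f x)"
        unfolding inner_m0_def by (rule infsum_fin[OF Afin]) (auto simp: A_def)
      also have "\<dots> = (\<Sum>x\<in>A. (\<Sum>y\<in>Nb x. complex_of_real (E x y * (a x)^2)) - (\<Sum>y\<in>A. T x y))"
      proof (rule sum.cong[OF refl])
        fix x
        have "complex_of_real ((m0 x)\<^sup>2) * cnj (f x) * mag_laplacian E m0 \<theta> f x
          = complex_of_real ((m0 x)\<^sup>2 * (1 / (m0 x)\<^sup>2)) * (\<Sum>y\<in>Nb x. cnj (f x) * (complex_of_real (E x y) * (f x - cis (\<theta> x y) * f y)))"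
          unfolding lap by (simp add: sum_distrib_left algebra_simps)
        also have "\<dots> = (\<Sum>y\<in>Nb x. complex_of_real (E x y * (a x)^2) - T x y)"
        proof -
          have e: "cnj (f x) * (complex_of_real (E x y) * (f x - cis (\<theta> x y) * f y)) = complex_of_real (E x y * (a x)^2) - T x y" for y
          proof -
            have "cnj (f x) * (complex_of_real (E x y) * (f x - cis (\<theta> x y) * f y)) = complex_of_real (E x y) * (cnj (f x) * f x) - T x y"
              unfolding T_def by (simp add: algebra_simps)
            then show ?thesis unfolding cf by simp
          qed
          show ?thesis unfolding sq of_real_1 mult_1 e ..
        qed
        also have "\<dots> = (\<Sum>y\<in>Nb x. complex_of_real (E x y * (a x)^2)) - (\<Sum>y\<in>A. T x y)"
          by (simp add: sum_subtractf TA)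
        finally show "complex_of_real ((m0 x)\<^sup>2) * cnj (f x) * mag_laplacian E m0 \<theta> f x = (\<Sum>y\<in>Nb x. complex_of_real (E x y * (a x)^2)) - (\<Sum>y\<in>A. T x y)" .
      qed
      also have "\<dots> = complex_of_real D - ST"
        unfolding D_def ST_def by (simp add: sum_subtractf)
      finally show ?thesis .
    qed
    have Tcnj: "cnj (T x y) = T y x" for x y
      unfolding T_def using Esym[of x y] thsym[of x y] by (simp add: cis_cnj algebra_simps)
    have "cnj ST = (\<Sum>x\<in>A. \<Sum>y\<in>A. T y x)" unfolding ST_def by (simp add: Tcnj)
    also have "\<dots> = ST" unfolding ST_def by (rule sum.swap)
    finally have "cnj ST = ST" .
    then have STreal: "ST = complex_of_real (Re ST)"
    proof -
      have "Im (cnj ST) = Im ST" using \<open>cnj ST = ST\<close> by simp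
      then have "Im ST = 0" by simp
      then show ?thesis by (simp add: complex_eq_iff)
    qed
    have normT: "cmod (T x y) = E x y * a x * a y" for x y
      unfolding T_def a_def using Epos[of x y] by (simp add: norm_mult)
    have "\<bar>Re ST\<bar> \<le> cmod ST" by (rule abs_Re_le_cmod)
    also have "\<dots> \<le> (\<Sum>x\<in>A. \<Sum>y\<in>A. cmod (T x y))" unfolding ST_def
      by (rule order_trans[OF norm_sum sum_mono]) (rule norm_sum)
    finally have P1: "\<bar>Re ST\<bar> \<le> (\<Sum>x\<in>A. \<Sum>y\<in>A. E x y * a x * a y)" by (simp add: normT)
    have "2 * (\<Sum>x\<in>A. \<Sum>y\<in>A. E x y * a x * a y) \<le> (\<Sum>x\<in>A. \<Sum>y\<in>A. w x y * (a x)^2 + w y x * (a y)^2)"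
      unfolding sum_distrib_left
    proof (intro sum_mono)
      fix x y
      show "2 * (E x y * a x * a y) \<le> w x y * (a x)^2 + w y x * (a y)^2"
        using amgm[OF Epos[of x y] mpos[of y] mpos[of x] m0pos[of x] m0pos[of y], of "a x" "a y"]
        unfolding w_def using Esym[of x y] by (simp add: algebra_simps)
    qed
    also have "\<dots> = R' + (\<Sum>x\<in>A. \<Sum>y\<in>A. w y x * (a y)^2)"
      unfolding R'_def by (simp add: sum.distrib)
    also have "(\<Sum>x\<in>A. \<Sum>y\<in>A. w y x * (a y)^2) = R'"
      unfolding R'_def by (rule sum.swap)
    finally have P2: "(\<Sum>x\<in>A. \<Sum>y\<in>A. E x y * a x * a y) \<le> R'" by simp
    have RR: "R' \<le> R"
      unfolding R'_def R_def
    proof (rule sum_mono)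
      fix x
      have "(\<Sum>y\<in>A. w x y * (a x)^2) = (\<Sum>y\<in>A \<inter> Nb x. w x y * (a x)^2)"
        by (rule sum.mono_neutral_right) (auto simp: Afin w_def Nb_def)
      also have "\<dots> \<le> (\<Sum>y\<in>Nb x. w x y * (a x)^2)"
        by (rule sum_mono2) (auto simp: Nbfin wpos)
      finally show "(\<Sum>y\<in>A. w x y * (a x)^2) \<le> (\<Sum>y\<in>Nb x. w x y * (a x)^2)" .
    qed
    have bound: "\<bar>Re ST\<bar> \<le> R" using P1 P2 RR by linarith
    have L: "inner_m0 m0 f (mag_laplacian E m0 \<theta> f) = complex_of_real (D - Re ST)"
      using lapinner STreal by (metis of_real_diff)
    show ?thesis
      unfolding L multop DV DW using bound
      by (simp add: less_eq_complex_def abs_le_iff)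
  qed
  show ?thesis using main by blast
qed

end
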